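(* Let $K$ be a field and $p\colon A\to B$ a morphism of cocommutative Hopf algebras over $K$. For a Hopf subalgebra $C\subseteq B$ let $p^{-1}(C)=\{x\in A \mid (p\otimes \mathrm{id}_A)\Delta(x)-1\otimes x\in C^+\otimes A\}$ (a Hopf subalgebra of $A$), and for a Hopf subalgebra $D\subseteq A$ let $p(D)$ denote its direct image. Then: (i) for all Hopf subalgebras $C$ of $B$, $p(p^{-1}(C))\subseteq C$; (ii) for all Hopf subalgebras $D$ of $A$, $D\subseteq p^{-1}(p(D))$; (iii) for all Hopf subalgebras $C\subseteq B$ and $D\subseteq A$, $D\subseteq p^{-1}(C)$ if and only if $p(D)\subseteq C$; (iv) for every Hopf subalgebra $C\subseteq B$, $C=p(p^{-1}(C))$ if and only if $C=p(D)$ for some Hopf subalgebra $D\subseteq A$.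
   Context: For a coalgebra $C$ with counit $\epsilon$, $C^+=\{x\in C\mid \epsilon(x)=0\}$. Morphisms of Hopf algebras are linear maps that are algebra and coalgebra morphisms. The set $p^{-1}(C)$ is called the h-inverse of $C$ along $p$. *)

theory Defs
  imports Complex_Main
begin

definition k_algebra :: "('k::field \<Rightarrow> 'a::ring_1 \<Rightarrow> 'a) \<Rightarrow> bool" where
  "k_algebra s \<longleftrightarrow> vector_space s \<and>
     (\<forall>c x y. s c (x * y) = s c x * y \<and> s c (x * y) = x * s c y)"

(* Elements of the algebraic tensor product V \<otimes>_K W are represented by finite
   formal sums \<Sum> v_i \<otimes> w_i, i.e. lists of pairs.  Two formal sums represent
   the same tensor iff they agree under all pairs of linear functionals
   (over a field, V \<otimes> W embeds into the bilinear forms on the product of the dual spaces). *)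
definition tensor_eq ::
  "('k::field \<Rightarrow> 'a::ab_group_add \<Rightarrow> 'a) \<Rightarrow> ('k \<Rightarrow> 'b::ab_group_add \<Rightarrow> 'b) \<Rightarrow> ('a \<times> 'b) list \<Rightarrow> ('a \<times> 'b) list \<Rightarrow> bool" where
  "tensor_eq s1 s2 xs ys \<longleftrightarrow>
     (\<forall>\<phi> \<psi>. Vector_Spaces.linear s1 (*) \<phi> \<longrightarrow> Vector_Spaces.linear s2 (*) \<psi> \<longrightarrow>
        (\<Sum>(a,b)\<leftarrow>xs. \<phi> a * \<psi> b) = (\<Sum>(a,b)\<leftarrow>ys. \<phi> a * \<psi> b))"

definition tensor3_eq ::
  "('k::field \<Rightarrow> 'a::ab_group_add \<Rightarrow> 'a) \<Rightarrow> ('k \<Rightarrow> 'b::ab_group_add \<Rightarrow> 'b) \<Rightarrow> ('k \<Rightarrow> 'c::ab_group_add \<Rightarrow> 'c)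
     \<Rightarrow> ('a \<times> 'b \<times> 'c) list \<Rightarrow> ('a \<times> 'b \<times> 'c) list \<Rightarrow> bool" where
  "tensor3_eq s1 s2 s3 xs ys \<longleftrightarrow>
     (\<forall>\<phi> \<psi> \<chi>. Vector_Spaces.linear s1 (*) \<phi> \<longrightarrow> Vector_Spaces.linear s2 (*) \<psi> \<longrightarrow>
        Vector_Spaces.linear s3 (*) \<chi> \<longrightarrow>
        (\<Sum>(a,b,c)\<leftarrow>xs. \<phi> a * \<psi> b * \<chi> c) = (\<Sum>(a,b,c)\<leftarrow>ys. \<phi> a * \<psi> b * \<chi> c))"

definition in_tensor_left ::
  "('k::field \<Rightarrow> 'a::ab_group_add \<Rightarrow> 'a) \<Rightarrow> ('k \<Rightarrow> 'b::ab_group_add \<Rightarrow> 'b) \<Rightarrow> 'a set \<Rightarrow> ('a \<times> 'b) list \<Rightarrow> bool" where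
  "in_tensor_left s1 s2 U t \<longleftrightarrow> (\<exists>ys. fst ` set ys \<subseteq> U \<and> tensor_eq s1 s2 t ys)"

definition in_tensor ::
  "('k::field \<Rightarrow> 'a::ab_group_add \<Rightarrow> 'a) \<Rightarrow> ('k \<Rightarrow> 'b::ab_group_add \<Rightarrow> 'b) \<Rightarrow> 'a set \<Rightarrow> 'b set \<Rightarrow> ('a \<times> 'b) list \<Rightarrow> bool" where
  "in_tensor s1 s2 U W t \<longleftrightarrow>
     (\<exists>ys. fst ` set ys \<subseteq> U \<and> snd ` set ys \<subseteq> W \<and> tensor_eq s1 s2 t ys)"

(* Hopf algebra (s, \<Delta>, \<epsilon>, S) on the algebra 'a; \<Delta> x is a representative of the
   coproduct as a formal sum of simple tensors. *)
definition hopf_algebra ::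
  "('k::field \<Rightarrow> 'a::ring_1 \<Rightarrow> 'a) \<Rightarrow> ('a \<Rightarrow> ('a \<times> 'a) list) \<Rightarrow> ('a \<Rightarrow> 'k) \<Rightarrow> ('a \<Rightarrow> 'a) \<Rightarrow> bool" where
  "hopf_algebra s \<Delta> \<epsilon> S \<longleftrightarrow>
     k_algebra s \<and>
     \<comment> \<open>\<Delta> linear\<close>
     (\<forall>x y. tensor_eq s s (\<Delta> (x + y)) (\<Delta> x @ \<Delta> y)) \<and>
     (\<forall>c x. tensor_eq s s (\<Delta> (s c x)) (map (\<lambda>(a,b). (s c a, b)) (\<Delta> x))) \<and>
     \<comment> \<open>\<epsilon> and S linear\<close>
     Vector_Spaces.linear s (*) \<epsilon> \<and> Vector_Spaces.linear s s S \<and>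
     \<comment> \<open>coassociativity\<close>
     (\<forall>x. tensor3_eq s s s
        (concat (map (\<lambda>(a,b). map (\<lambda>(a1,a2). (a1, a2, b)) (\<Delta> a)) (\<Delta> x)))
        (concat (map (\<lambda>(a,b). map (\<lambda>(b1,b2). (a, b1, b2)) (\<Delta> b)) (\<Delta> x)))) \<and>
     \<comment> \<open>counit\<close>
     (\<forall>x. (\<Sum>(a,b)\<leftarrow>\<Delta> x. s (\<epsilon> a) b) = x) \<and>
     (\<forall>x. (\<Sum>(a,b)\<leftarrow>\<Delta> x. s (\<epsilon> b) a) = x) \<and>
     \<comment> \<open>\<Delta> and \<epsilon> algebra morphisms\<close>
     (\<forall>x y. tensor_eq s s (\<Delta> (x * y))
        (concat (map (\<lambda>(a,b). map (\<lambda>(c,d). (a * c, b * d)) (\<Delta> y)) (\<Delta> x)))) \<and>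
     tensor_eq s s (\<Delta> 1) [(1, 1)] \<and>
     (\<forall>x y. \<epsilon> (x * y) = \<epsilon> x * \<epsilon> y) \<and> \<epsilon> 1 = 1 \<and>
     \<comment> \<open>antipode\<close>
     (\<forall>x. (\<Sum>(a,b)\<leftarrow>\<Delta> x. S a * b) = s (\<epsilon> x) 1) \<and>
     (\<forall>x. (\<Sum>(a,b)\<leftarrow>\<Delta> x. a * S b) = s (\<epsilon> x) 1)"

definition cocommutative ::
  "('k::field \<Rightarrow> 'a::ab_group_add \<Rightarrow> 'a) \<Rightarrow> ('a \<Rightarrow> ('a \<times> 'a) list) \<Rightarrow> bool" where
  "cocommutative s \<Delta> \<longleftrightarrow> (\<forall>x. tensor_eq s s (\<Delta> x) (map (\<lambda>(a,b). (b,a)) (\<Delta> x)))"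

definition hopf_morphism ::
  "('k::field \<Rightarrow> 'a::ring_1 \<Rightarrow> 'a) \<Rightarrow> ('a \<Rightarrow> ('a \<times> 'a) list) \<Rightarrow> ('a \<Rightarrow> 'k)
   \<Rightarrow> ('k \<Rightarrow> 'b::ring_1 \<Rightarrow> 'b) \<Rightarrow> ('b \<Rightarrow> ('b \<times> 'b) list) \<Rightarrow> ('b \<Rightarrow> 'k)
   \<Rightarrow> ('a \<Rightarrow> 'b) \<Rightarrow> bool" where
  "hopf_morphism sA \<Delta>A \<epsilon>A sB \<Delta>B \<epsilon>B p \<longleftrightarrow>
     Vector_Spaces.linear sA sB p \<and>
     (\<forall>x y. p (x * y) = p x * p y) \<and> p 1 = 1 \<and>
     (\<forall>x. \<epsilon>B (p x) = \<epsilon>A x) \<and>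
     (\<forall>x. tensor_eq sB sB (\<Delta>B (p x)) (map (\<lambda>(a,b). (p a, p b)) (\<Delta>A x)))"

definition hopf_subalgebra ::
  "('k::field \<Rightarrow> 'a::ring_1 \<Rightarrow> 'a) \<Rightarrow> ('a \<Rightarrow> ('a \<times> 'a) list) \<Rightarrow> ('a \<Rightarrow> 'a) \<Rightarrow> 'a set \<Rightarrow> bool" where
  "hopf_subalgebra s \<Delta> S D \<longleftrightarrow>
     module.subspace s D \<and> 1 \<in> D \<and> (\<forall>x\<in>D. \<forall>y\<in>D. x * y \<in> D) \<and>
     (\<forall>x\<in>D. in_tensor s s D D (\<Delta> x)) \<and> (\<forall>x\<in>D. S x \<in> D)"

definition aug_ideal :: "('a \<Rightarrow> 'k::zero) \<Rightarrow> 'a set \<Rightarrow> 'a set" where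
  "aug_ideal \<epsilon> C = {x \<in> C. \<epsilon> x = 0}"

definition h_inverse ::
  "('k::field \<Rightarrow> 'a::ring_1 \<Rightarrow> 'a) \<Rightarrow> ('a \<Rightarrow> ('a \<times> 'a) list)
   \<Rightarrow> ('k \<Rightarrow> 'b::ring_1 \<Rightarrow> 'b) \<Rightarrow> ('b \<Rightarrow> 'k) \<Rightarrow> ('a \<Rightarrow> 'b) \<Rightarrow> 'b set \<Rightarrow> 'a set" where
  "h_inverse sA \<Delta>A sB \<epsilon>B p C =
     {x. in_tensor_left sB sA (aug_ideal \<epsilon>B C)
           (map (\<lambda>(a,b). (p a, b)) (\<Delta>A x) @ [(- 1, x)])}"

end

theory Submission
  imports Defs
begin



definition hom :: "('k::field \<Rightarrow> 'a::ab_group_add \<Rightarrow> 'a) \<Rightarrow> ('k \<Rightarrow> 'b::ab_group_add \<Rightarrow> 'b) \<Rightarrow> ('a \<Rightarrow> 'b) \<Rightarrow> bool" where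
  "hom s1 s2 f \<longleftrightarrow> (\<forall>x y. f (x + y) = f x + f y) \<and> (\<forall>c x. f (s1 c x) = s2 c (f x))"

lemma vs_field: "vector_space ((*) :: 'k::field \<Rightarrow> 'k \<Rightarrow> 'k)"
  by unfold_locales (auto simp: algebra_simps)

lemma linear_iff_hom:
  assumes "vector_space s1" "vector_space s2"
  shows "Vector_Spaces.linear s1 s2 f \<longleftrightarrow> hom s1 s2 f"
  using assms by (auto simp: Vector_Spaces.linear_iff hom_def)

lemma linear_iff_lin:
  assumes "vector_space s1"
  shows "Vector_Spaces.linear s1 (*) f \<longleftrightarrow> hom s1 (*) f"
  using linear_iff_hom[OF assms vs_field] .

lemma homD: "hom s1 s2 f \<Longrightarrow> f (x + y) = f x + f y" "hom s1 s2 f \<Longrightarrow> f (s1 c x) = s2 c (f x)"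
  by (auto simp: hom_def)

lemma hom_0: "hom s1 s2 f \<Longrightarrow> f 0 = 0"
  using homD(1)[of s1 s2 f 0 0] by simp

lemma hom_neg: "hom s1 s2 f \<Longrightarrow> f (- x) = - f x"
  using homD(1)[of s1 s2 f x "-x"] hom_0[of s1 s2 f] by (simp add: eq_neg_iff_add_eq_0 add.commute)

lemma hom_diff: "hom s1 s2 f \<Longrightarrow> f (x - y) = f x - f y"
  using homD(1)[of s1 s2 f x "-y"] hom_neg[of s1 s2 f y] by simp

lemma hom_sum: "hom s1 s2 h \<Longrightarrow> h (sum g E) = (\<Sum>e\<in>E. h (g e))"
  by (induct E rule: infinite_finite_induct) (auto simp: hom_0 homD)

lemma hom_comp: "hom s1 s2 g \<Longrightarrow> hom s2 s3 f \<Longrightarrow> hom s1 s3 (\<lambda>x. f (g x))"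
  by (auto simp: hom_def)

lemma hom_id: "hom s s (\<lambda>x. x)"
  by (auto simp: hom_def)

lemma hom_add_fun: "vector_space s2 \<Longrightarrow> hom s1 s2 f \<Longrightarrow> hom s1 s2 g \<Longrightarrow> hom s1 s2 (\<lambda>x. f x + g x)"
  by (auto simp: hom_def vector_space.vector_space_assms(1) algebra_simps)

lemma vs_module: "vector_space s \<Longrightarrow> module s"
  by (simp add: module_iff_vector_space)

lemma hom_diff_fun: "vector_space s2 \<Longrightarrow> hom s1 s2 f \<Longrightarrow> hom s1 s2 g \<Longrightarrow> hom s1 s2 (\<lambda>x. f x - g x)"
  by (auto simp: hom_def module.scale_right_diff_distrib[OF vs_module] algebra_simps)

lemma lin_mult_right: "hom s (*) f \<Longrightarrow> hom s (*) (\<lambda>x. f x * c)"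
  by (auto simp: hom_def algebra_simps)

lemma lin_mult_left: "hom s (*) f \<Longrightarrow> hom s (*) (\<lambda>x. c * f x)"
  by (auto simp: hom_def algebra_simps)

lemma hom_scale_fun: "vector_space s2 \<Longrightarrow> hom s (*) f \<Longrightarrow> hom s s2 (\<lambda>x. s2 (f x) v)"
  by (auto simp: hom_def vector_space.vector_space_assms)

lemma hom_const0: "vector_space s2 \<Longrightarrow> hom s1 s2 (\<lambda>x. 0)"
  by (auto simp: hom_def module.scale_zero_right[OF vs_module])

section \<open>Sums over lists of pairs\<close>

definition sw :: "('a \<times> 'b) list \<Rightarrow> ('a \<Rightarrow> 'b \<Rightarrow> 'c::comm_monoid_add) \<Rightarrow> 'c" where
  "sw t f = (\<Sum>(a,b)\<leftarrow>t. f a b)"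

definition sw3 :: "('a \<times> 'b \<times> 'c) list \<Rightarrow> ('a \<Rightarrow> 'b \<Rightarrow> 'c \<Rightarrow> 'd::comm_monoid_add) \<Rightarrow> 'd" where
  "sw3 t f = (\<Sum>(a,b,c)\<leftarrow>t. f a b c)"

lemma sw_Nil[simp]: "sw [] f = 0" by (simp add: sw_def)
lemma sw_Cons[simp]: "sw ((a,b)#t) f = f a b + sw t f" by (simp add: sw_def)
lemma sw_append[simp]: "sw (t @ u) f = sw t f + sw u f" by (simp add: sw_def)

lemma sw_cong: "(\<And>a b. (a,b) \<in> set t \<Longrightarrow> f a b = g a b) \<Longrightarrow> sw t f = sw t g"
  by (induction t) (auto simp: sw_def)

lemma sw_add: "sw t (\<lambda>a b. f a b + g a b) = sw t f + sw t g"
  by (induction t) (auto simp: sw_def algebra_simps)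

lemma sw_zero[simp]: "sw t (\<lambda>a b. 0) = 0"
  by (induction t) (auto simp: sw_def)

lemma sw_diff: "sw t (\<lambda>a b. (f a b :: 'c::ab_group_add) - g a b) = sw t f - sw t g"
  by (induction t) (auto simp: sw_def algebra_simps)

lemma sw_map[simp]: "sw (map (\<lambda>(a,b). (h a b, k a b)) t) f = sw t (\<lambda>a b. f (h a b) (k a b))"
  by (induction t) (auto simp: sw_def)

lemma sw_concat[simp]:
  "sw (concat (map (\<lambda>(a,b). map (\<lambda>(c,d). (h a b c d, k a b c d)) (u a b)) t)) f
   = sw t (\<lambda>a b. sw (u a b) (\<lambda>c d. f (h a b c d) (k a b c d)))"
  by (induction t) (auto simp: sw_def o_def case_prod_unfold)

lemma sw3_concat1:
  "sw3 (concat (map (\<lambda>(a,b). map (\<lambda>(a1,a2). (a1, a2, b)) (u a)) t)) f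
   = sw t (\<lambda>a b. sw (u a) (\<lambda>a1 a2. f a1 a2 b))"
  by (induction t) (auto simp: sw_def sw3_def o_def case_prod_unfold)

lemma sw3_concat2:
  "sw3 (concat (map (\<lambda>(a,b). map (\<lambda>(b1,b2). (a, b1, b2)) (u b)) t)) f
   = sw t (\<lambda>a b. sw (u b) (\<lambda>b1 b2. f a b1 b2))"
  by (induction t) (auto simp: sw_def sw3_def o_def case_prod_unfold)

lemma sw3_concat2':
  "sw3 (concat (map (\<lambda>(a,b). map (Pair a) (u b)) t)) f
   = sw t (\<lambda>a b. sw (u b) (\<lambda>b1 b2. f a b1 b2))"
  by (induction t) (auto simp: sw_def sw3_def o_def case_prod_unfold)

lemma sw_swap: "sw t (\<lambda>a b. sw u (\<lambda>c d. F a b c d)) = sw u (\<lambda>c d. sw t (\<lambda>a b. F a b c d))"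
  by (induction t) (auto simp: sw_add)

lemma sw_sum: "sw t (\<lambda>a b. \<Sum>e\<in>E. F a b e) = (\<Sum>e\<in>E. sw t (\<lambda>a b. F a b e))"
  by (induction t) (auto simp: sum.distrib)

lemma sw_mult_left: "(c::'c::semiring_0) * sw t f = sw t (\<lambda>a b. c * f a b)"
  by (induction t) (auto simp: algebra_simps)

lemma sw_mult_right: "sw t f * (c::'c::semiring_0) = sw t (\<lambda>a b. f a b * c)"
  by (induction t) (auto simp: algebra_simps)

lemma hom_sw: "hom s1 s2 h \<Longrightarrow> h (sw t f) = sw t (\<lambda>a b. h (f a b))"
  by (induction t) (auto simp: hom_0 homD)

lemma hom_sw_fun: "vector_space s2 \<Longrightarrow> (\<And>a b. hom s1 s2 (F a b)) \<Longrightarrow> hom s1 s2 (\<lambda>x. sw t (\<lambda>a b. F a b x))"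
proof (induction t)
  case Nil then show ?case by (simp add: hom_const0)
next
  case (Cons ab t) then show ?case by (cases ab) (auto intro!: hom_add_fun)
qed

lemma sw_scale: "vector_space s \<Longrightarrow> s c (sw t f) = sw t (\<lambda>a b. s c (f a b))"
  by (induction t) (auto simp: vector_space.vector_space_assms(1) module.scale_zero_right[OF vs_module])

lemma tensor_eq_sw: "tensor_eq s1 s2 t t' \<longleftrightarrow> (\<forall>\<phi> \<psi>. Vector_Spaces.linear s1 (*) \<phi> \<longrightarrow> Vector_Spaces.linear s2 (*) \<psi> \<longrightarrow>
   sw t (\<lambda>a b. \<phi> a * \<psi> b) = sw t' (\<lambda>a b. \<phi> a * \<psi> b))"
  by (simp add: tensor_eq_def sw_def)

lemma tensor_eqD: "tensor_eq s1 s2 t t' \<Longrightarrow> vector_space s1 \<Longrightarrow> vector_space s2 \<Longrightarrow> hom s1 (*) \<phi> \<Longrightarrow> hom s2 (*) \<psi> \<Longrightarrow>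
   sw t (\<lambda>a b. \<phi> a * \<psi> b) = sw t' (\<lambda>a b. \<phi> a * \<psi> b)"
  by (simp add: tensor_eq_sw linear_iff_lin)

lemma tensor_eqI: "vector_space s1 \<Longrightarrow> vector_space s2 \<Longrightarrow>
  (\<And>\<phi> \<psi>. hom s1 (*) \<phi> \<Longrightarrow> hom s2 (*) \<psi> \<Longrightarrow> sw t (\<lambda>a b. \<phi> a * \<psi> b) = sw t' (\<lambda>a b. \<phi> a * \<psi> b))
  \<Longrightarrow> tensor_eq s1 s2 t t'"
  by (simp add: tensor_eq_sw linear_iff_lin)

lemma tensor3_eqD: "tensor3_eq s1 s2 s3 t t' \<Longrightarrow> vector_space s1 \<Longrightarrow> vector_space s2 \<Longrightarrow> vector_space s3 \<Longrightarrow>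
   hom s1 (*) \<phi> \<Longrightarrow> hom s2 (*) \<psi> \<Longrightarrow> hom s3 (*) \<chi> \<Longrightarrow>
   sw3 t (\<lambda>a b c. \<phi> a * \<psi> b * \<chi> c) = sw3 t' (\<lambda>a b c. \<phi> a * \<psi> b * \<chi> c)"
  by (simp add: tensor3_eq_def sw3_def linear_iff_lin)

section \<open>Linear algebra\<close>

lemma separation:
  assumes vs: "vector_space s" and eq: "\<And>\<phi>. hom s (*) \<phi> \<Longrightarrow> \<phi> u = \<phi> v"
  shows "u = v"
proof (rule ccontr)
  assume "u \<noteq> v"
  then have ne: "u - v \<noteq> 0" by simp
  interpret vector_space s by (fact vs)
  interpret vector_space_pair s "(*) :: 'a \<Rightarrow> 'a \<Rightarrow> 'a"
    by (intro vector_space_pair.intro vs vs_field)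
  have "independent {u - v}" using ne by simp
  then obtain g where g: "Vector_Spaces.linear s (*) g" "g (u - v) = 1"
    using linear_independent_extend[of "{u - v}" "\<lambda>_. 1"] by auto
  then have h: "hom s (*) g" using linear_iff_lin[OF vs] by simp
  have "g (u - v) = g u - g v" by (rule hom_diff[OF h])
  also have "\<dots> = 0" using eq[OF h] by simp
  finally show False using g by simp
qed

lemma projection:
  assumes vs: "vector_space s" and U: "module.subspace s U"
  shows "\<exists>Q. hom s s Q \<and> (\<forall>x. Q x \<in> U) \<and> (\<forall>u\<in>U. Q u = u)"
proof -
  interpret vector_space s by (fact vs)
  interpret vector_space_pair s s by (intro vector_space_pair.intro vs vs)
  have "\<exists>g. g ` UNIV \<subseteq> U \<and> Vector_Spaces.linear s s g \<and> (\<forall>v\<in>U. g (id v) = v)"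
    by (rule linear_exists_left_inverse_on[OF linear_id U]) simp
  then obtain g where "g ` UNIV \<subseteq> U" "Vector_Spaces.linear s s g" "\<forall>v\<in>U. g v = v" by auto
  then show ?thesis using linear_iff_hom[OF vs vs] by (intro exI[of _ g]) auto
qed

lemma expansion:
  assumes vs: "vector_space s" and fin: "finite X"
  shows "\<exists>E r. finite E \<and> (\<forall>e. hom s (*) (\<lambda>v. r v e)) \<and> (\<forall>v\<in>X. v = (\<Sum>e\<in>E. s (r v e) e))"
proof -
  interpret vector_space s by (fact vs)
  define B where "B = extend_basis {}"
  have iB: "independent B" and sB: "span B = UNIV"
    unfolding B_def using independent_extend_basis[OF independent_empty] span_extend_basis[OF independent_empty] by auto
  define r where "r v e = representation B v e" for v e
  define E where "E = (\<Union>v\<in>X. {e. r v e \<noteq> 0})"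
  have fE: "finite E" unfolding E_def r_def using fin finite_representation by auto
  have lin: "hom s (*) (\<lambda>v. r v e)" for e
    using linear_representation[OF iB sB, of e] linear_iff_lin[OF vs] by (simp add: r_def)
  have "v = (\<Sum>e\<in>E. s (r v e) e)" if v: "v \<in> X" for v
  proof -
    have "v = (\<Sum>e | r v e \<noteq> 0. s (r v e) e)"
      using sum_nonzero_representation_eq[OF iB, of v] sB by (simp add: r_def)
    also have "\<dots> = (\<Sum>e\<in>E. s (r v e) e)"
      by (rule sum.mono_neutral_left) (use fE v in \<open>auto simp: E_def\<close>)
    finally show ?thesis .
  qed
  then show ?thesis using fE lin by blast
qed

lemma transport2:
  assumes vs1: "vector_space s1" and vs2: "vector_space s2" and te: "tensor_eq s1 s2 t t'"
    and l1: "\<And>b. hom s1 (*) (\<lambda>a. \<beta> a b)" and l2: "\<And>a. hom s2 (*) (\<beta> a)"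
  shows "sw t \<beta> = sw t' \<beta>"
proof -
  obtain E r where fE: "finite E" and lr: "\<And>e. hom s1 (*) (\<lambda>v. r v e)"
    and ex: "\<And>v. v \<in> fst ` set (t @ t') \<Longrightarrow> v = (\<Sum>e\<in>E. s1 (r v e) e)"
    using expansion[OF vs1, of "fst ` set (t @ t')"] by blast
  have eq: "\<beta> a b = (\<Sum>e\<in>E. r a e * \<beta> e b)" if "a \<in> fst ` set (t @ t')" for a b
  proof -
    have "\<beta> a b = \<beta> (\<Sum>e\<in>E. s1 (r a e) e) b" using ex[OF that] by simp
    also have "\<dots> = (\<Sum>e\<in>E. r a e * \<beta> e b)"
      using hom_sum[OF l1[of b], of "\<lambda>e. s1 (r a e) e" E] homD(2)[OF l1[of b]] by simp
    finally show ?thesis .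
  qed
  have "sw t \<beta> = sw t (\<lambda>a b. \<Sum>e\<in>E. r a e * \<beta> e b)"
    by (rule sw_cong) (rule eq, force)
  also have "\<dots> = (\<Sum>e\<in>E. sw t (\<lambda>a b. r a e * \<beta> e b))" by (rule sw_sum)
  also have "\<dots> = (\<Sum>e\<in>E. sw t' (\<lambda>a b. r a e * \<beta> e b))"
    by (rule sum.cong[OF refl], rule tensor_eqD[OF te vs1 vs2 lr l2])
  also have "\<dots> = sw t' (\<lambda>a b. \<Sum>e\<in>E. r a e * \<beta> e b)" by (rule sw_sum[symmetric])
  also have "\<dots> = sw t' \<beta>"
    by (rule sw_cong) (rule eq[symmetric], force)
  finally show ?thesis .
qed




lemma sw3_cong: "(\<And>a b c. (a,b,c) \<in> set t \<Longrightarrow> f a b c = g a b c) \<Longrightarrow> sw3 t f = sw3 t g"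
  by (induction t) (auto simp: sw3_def)

lemma sw3_sum: "sw3 t (\<lambda>a b c. \<Sum>e\<in>E. F a b c e) = (\<Sum>e\<in>E. sw3 t (\<lambda>a b c. F a b c e))"
  by (induction t) (auto simp: sw3_def sum.distrib)

definition bil :: "('k::field \<Rightarrow> 'a::ab_group_add \<Rightarrow> 'a) \<Rightarrow> ('k \<Rightarrow> 'b::ab_group_add \<Rightarrow> 'b) \<Rightarrow> ('k \<Rightarrow> 'c::ab_group_add \<Rightarrow> 'c) \<Rightarrow> ('a \<Rightarrow> 'b \<Rightarrow> 'c) \<Rightarrow> bool" where
  "bil s1 s2 s3 \<beta> \<longleftrightarrow> (\<forall>b. hom s1 s3 (\<lambda>a. \<beta> a b)) \<and> (\<forall>a. hom s2 s3 (\<beta> a))"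

definition tril :: "('k::field \<Rightarrow> 'a::ab_group_add \<Rightarrow> 'a) \<Rightarrow> ('k \<Rightarrow> 'b::ab_group_add \<Rightarrow> 'b) \<Rightarrow> ('k \<Rightarrow> 'c::ab_group_add \<Rightarrow> 'c) \<Rightarrow> ('a \<Rightarrow> 'b \<Rightarrow> 'c \<Rightarrow> 'k) \<Rightarrow> bool" where
  "tril s1 s2 s3 \<tau> \<longleftrightarrow> (\<forall>b c. hom s1 (*) (\<lambda>a. \<tau> a b c)) \<and> (\<forall>a c. hom s2 (*) (\<lambda>b. \<tau> a b c)) \<and> (\<forall>a b. hom s3 (*) (\<tau> a b))"

lemma transport2v:
  assumes vs1: "vector_space s1" and vs2: "vector_space s2" and vs3: "vector_space s3"
    and te: "tensor_eq s1 s2 t t'" and b: "bil s1 s2 s3 \<beta>"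
  shows "sw t \<beta> = sw t' \<beta>"
proof (rule separation[OF vs3])
  fix \<theta> assume th: "hom s3 (*) \<theta>"
  have "sw t (\<lambda>a b. \<theta> (\<beta> a b)) = sw t' (\<lambda>a b. \<theta> (\<beta> a b))"
    by (rule transport2[OF vs1 vs2 te]) (use b th in \<open>auto simp: bil_def intro: hom_comp\<close>)
  then show "\<theta> (sw t \<beta>) = \<theta> (sw t' \<beta>)" by (simp add: hom_sw[OF th])
qed

lemma transport3:
  assumes vs1: "vector_space s1" and vs2: "vector_space s2" and vs3: "vector_space s3"
    and te: "tensor3_eq s1 s2 s3 t t'" and tr: "tril s1 s2 s3 \<tau>"
  shows "sw3 t \<tau> = sw3 t' \<tau>"
proof -
  have l1: "hom s1 (*) (\<lambda>a. \<tau> a b c)" and l2: "hom s2 (*) (\<lambda>b. \<tau> a b c)" and l3: "hom s3 (*) (\<tau> a b)"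
    for a b c using tr by (auto simp: tril_def)
  obtain E1 r1 where fE1: "finite E1" and lr1: "\<And>e. hom s1 (*) (\<lambda>v. r1 v e)"
    and ex1: "\<And>v. v \<in> fst ` set (t @ t') \<Longrightarrow> v = (\<Sum>e\<in>E1. s1 (r1 v e) e)"
    using expansion[OF vs1, of "fst ` set (t @ t')"] by blast
  obtain E2 r2 where fE2: "finite E2" and lr2: "\<And>e. hom s2 (*) (\<lambda>v. r2 v e)"
    and ex2: "\<And>v. v \<in> (fst \<circ> snd) ` set (t @ t') \<Longrightarrow> v = (\<Sum>e\<in>E2. s2 (r2 v e) e)"
    using expansion[OF vs2, of "(fst \<circ> snd) ` set (t @ t')"] by blast
  have eq: "\<tau> a b c = (\<Sum>e\<in>E1. \<Sum>e'\<in>E2. r1 a e * r2 b e' * \<tau> e e' c)"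
    if "(a,b,c) \<in> set (t @ t')" for a b c
  proof -
    have a: "a \<in> fst ` set (t @ t')" and b: "b \<in> (fst \<circ> snd) ` set (t @ t')"
      using that by force+
    have "\<tau> a b c = \<tau> (\<Sum>e\<in>E1. s1 (r1 a e) e) b c" using ex1[OF a] by simp
    also have "\<dots> = (\<Sum>e\<in>E1. r1 a e * \<tau> e b c)"
      using hom_sum[OF l1[of b c], of "\<lambda>e. s1 (r1 a e) e" E1] homD(2)[OF l1] by simp
    also have "\<dots> = (\<Sum>e\<in>E1. r1 a e * (\<Sum>e'\<in>E2. r2 b e' * \<tau> e e' c))"
    proof (rule sum.cong[OF refl])
      fix e
      have "\<tau> e b c = \<tau> e (\<Sum>e'\<in>E2. s2 (r2 b e') e') c" using ex2[OF b] by simp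
      also have "\<dots> = (\<Sum>e'\<in>E2. r2 b e' * \<tau> e e' c)"
        using hom_sum[OF l2[of e c], of "\<lambda>e'. s2 (r2 b e') e'" E2] homD(2)[OF l2] by simp
      finally show "r1 a e * \<tau> e b c = r1 a e * (\<Sum>e'\<in>E2. r2 b e' * \<tau> e e' c)" by simp
    qed
    also have "\<dots> = (\<Sum>e\<in>E1. \<Sum>e'\<in>E2. r1 a e * r2 b e' * \<tau> e e' c)"
      by (simp add: sum_distrib_left mult.assoc)
    finally show ?thesis .
  qed
  have "sw3 t \<tau> = sw3 t (\<lambda>a b c. \<Sum>e\<in>E1. \<Sum>e'\<in>E2. r1 a e * r2 b e' * \<tau> e e' c)"
    by (rule sw3_cong) (rule eq, simp)
  also have "\<dots> = (\<Sum>e\<in>E1. \<Sum>e'\<in>E2. sw3 t (\<lambda>a b c. r1 a e * r2 b e' * \<tau> e e' c))"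
    by (simp add: sw3_sum)
  also have "\<dots> = (\<Sum>e\<in>E1. \<Sum>e'\<in>E2. sw3 t' (\<lambda>a b c. r1 a e * r2 b e' * \<tau> e e' c))"
    by (intro sum.cong refl tensor3_eqD[OF te vs1 vs2 vs3 lr1 lr2 l3])
  also have "\<dots> = sw3 t' (\<lambda>a b c. \<Sum>e\<in>E1. \<Sum>e'\<in>E2. r1 a e * r2 b e' * \<tau> e e' c)"
    by (simp add: sw3_sum)
  also have "\<dots> = sw3 t' \<tau>"
    by (rule sw3_cong) (rule eq[symmetric], simp)
  finally show ?thesis .
qed




locale hopf =
  fixes s :: "'k::field \<Rightarrow> 'a::ring_1 \<Rightarrow> 'a" and D :: "'a \<Rightarrow> ('a \<times> 'a) list"
    and eps :: "'a \<Rightarrow> 'k" and S :: "'a \<Rightarrow> 'a"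
  assumes H: "hopf_algebra s D eps S"
begin

lemma vs: "vector_space s" using H by (simp add: hopf_algebra_def k_algebra_def)

lemma scale_mult_left[simp]: "s c x * y = s c (x * y)"
  using H unfolding hopf_algebra_def k_algebra_def by metis
lemma scale_mult_right[simp]: "x * s c y = s c (x * y)"
  using H unfolding hopf_algebra_def k_algebra_def by metis

lemma D_add: "tensor_eq s s (D (x + y)) (D x @ D y)"
  and D_scale: "tensor_eq s s (D (s c x)) (map (\<lambda>(a,b). (s c a, b)) (D x))"
  and eps_lin: "hom s (*) eps" and S_hom: "hom s s S"
  and coassoc: "tensor3_eq s s s
        (concat (map (\<lambda>(a,b). map (\<lambda>(a1,a2). (a1, a2, b)) (D a)) (D x)))
        (concat (map (\<lambda>(a,b). map (\<lambda>(b1,b2). (a, b1, b2)) (D b)) (D x)))"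
  and counitL: "sw (D x) (\<lambda>a b. s (eps a) b) = x"
  and counitR: "sw (D x) (\<lambda>a b. s (eps b) a) = x"
  and D_mult: "tensor_eq s s (D (x * y)) (concat (map (\<lambda>(a,b). map (\<lambda>(c,d). (a * c, b * d)) (D y)) (D x)))"
  and D_one: "tensor_eq s s (D 1) [(1, 1)]"
  and eps_mult: "eps (x * y) = eps x * eps y" and eps_one: "eps 1 = 1"
  and antiL: "sw (D x) (\<lambda>a b. S a * b) = s (eps x) 1"
  and antiR: "sw (D x) (\<lambda>a b. a * S b) = s (eps x) 1"
  using H vs vs_field by (auto simp: hopf_algebra_def sw_def linear_iff_hom linear_iff_lin)

lemma add_scale[simp]: "s c (x + y) = s c x + s c y" and scale_add: "s (c + d) x = s c x + s d x"
  and scale_scale[simp]: "s c (s d x) = s (c * d) x" and scale_one[simp]: "s 1 x = x"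
  using vs by (auto simp: vector_space.vector_space_assms)

lemma scale_zero_left[simp]: "s 0 x = 0" and scale_zero_right[simp]: "s c 0 = 0"
  using module.scale_zero_left[OF vs_module[OF vs]] module.scale_zero_right[OF vs_module[OF vs]] by auto

lemma scale_minus_left[simp]: "s (- c) x = - s c x"
  using module.scale_minus_left[OF vs_module[OF vs]] by auto

lemma hom_multR: "hom s s (\<lambda>x. x * c)" and hom_multL: "hom s s (\<lambda>x. c * x)"
  by (auto simp: hom_def ring_distribs)

lemma S_add[simp]: "S (x + y) = S x + S y" and S_scale[simp]: "S (s c x) = s c (S x)"
  and eps_add[simp]: "eps (x + y) = eps x + eps y" and eps_scale[simp]: "eps (s c x) = c * eps x"
  using S_hom eps_lin by (auto simp: hom_def)

lemma DT: "bil s s s3 \<beta> \<Longrightarrow> vector_space s3 \<Longrightarrow> tensor_eq s s (D x) t \<Longrightarrow> sw (D x) \<beta> = sw t \<beta>"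
  by (rule transport2v[OF vs vs])

lemma DL: assumes b: "bil s s s3 \<beta>" and v3: "vector_space s3"
  shows "hom s s3 (\<lambda>u. sw (D u) \<beta>)"
proof -
  have l1: "hom s s3 (\<lambda>a. \<beta> a b)" for b using b by (auto simp: bil_def)
  show ?thesis unfolding hom_def
  proof safe
    fix x y show "sw (D (x + y)) \<beta> = sw (D x) \<beta> + sw (D y) \<beta>"
      using DT[OF b v3 D_add] by simp
  next
    fix c x
    have "sw (D (s c x)) \<beta> = sw (D x) (\<lambda>a b. \<beta> (s c a) b)"
      using DT[OF b v3 D_scale] by simp
    also have "\<dots> = sw (D x) (\<lambda>a b. s3 c (\<beta> a b))" using homD(2)[OF l1] by simp
    also have "\<dots> = s3 c (sw (D x) \<beta>)" by (simp add: sw_scale[OF v3])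
    finally show "sw (D (s c x)) \<beta> = s3 c (sw (D x) \<beta>)" .
  qed
qed

lemma CA: assumes "tril s s s \<tau>"
  shows "sw (D x) (\<lambda>a b. sw (D a) (\<lambda>a1 a2. \<tau> a1 a2 b)) = sw (D x) (\<lambda>a b. sw (D b) (\<lambda>b1 b2. \<tau> a b1 b2))"
  using transport3[OF vs vs vs coassoc assms] by (simp add: sw3_concat1 sw3_concat2 sw3_concat2')

lemma counitLf: "hom s s2 f \<Longrightarrow> vector_space s2 \<Longrightarrow> sw (D x) (\<lambda>a b. s2 (eps a) (f b)) = f x"
  using hom_sw[of s s2 f "D x" "\<lambda>a b. s (eps a) b"] counitL[of x] by (simp add: homD)

lemma counitRf: "hom s s2 f \<Longrightarrow> vector_space s2 \<Longrightarrow> sw (D x) (\<lambda>a b. s2 (eps b) (f a)) = f x"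
  using hom_sw[of s s2 f "D x" "\<lambda>a b. s (eps b) a"] counitR[of x] by (simp add: homD)

lemma counitLk: "hom s (*) f \<Longrightarrow> sw (D x) (\<lambda>a b. eps a * f b) = f x"
  using counitLf[OF _ vs_field] by simp

lemma counitRk: "hom s (*) f \<Longrightarrow> sw (D x) (\<lambda>a b. f a * eps b) = f x"
  using counitRf[OF _ vs_field, of f x] by (simp add: mult.commute)

lemma eps_S: "eps (S x) = eps x"
proof -
  have "eps (sw (D x) (\<lambda>a b. S a * b)) = eps x"
    by (simp add: antiL eps_one)
  then have "sw (D x) (\<lambda>a b. eps (S a) * eps b) = eps x"
    by (simp add: hom_sw[OF eps_lin] eps_mult)
  then show ?thesis using counitRk[OF hom_comp[OF S_hom eps_lin]] by simp
qed

lemma S_one: "S 1 = 1"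
proof -
  have b: "bil s s s (\<lambda>a b. S a * b)"
    unfolding bil_def by (auto intro: hom_comp[OF S_hom hom_multR] hom_multL)
  have "sw (D 1) (\<lambda>a b. S a * b) = S 1 * 1"
    using DT[OF b vs D_one] by simp
  then show ?thesis using antiL[of 1] by (simp add: eps_one)
qed

end




lemma bilI: "(\<And>b. hom s1 s3 (\<lambda>a. \<beta> a b)) \<Longrightarrow> (\<And>a. hom s2 s3 (\<lambda>b. \<beta> a b)) \<Longrightarrow> bil s1 s2 s3 \<beta>"
  by (auto simp: bil_def)

lemma bilD: "bil s1 s2 s3 \<beta> \<Longrightarrow> hom s1 s3 (\<lambda>a. \<beta> a b)" "bil s1 s2 s3 \<beta> \<Longrightarrow> hom s2 s3 (\<lambda>b. \<beta> a b)"
  by (auto simp: bil_def)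

lemma trilI: "(\<And>b c. hom s1 (*) (\<lambda>a. \<tau> a b c)) \<Longrightarrow> (\<And>a c. hom s2 (*) (\<lambda>b. \<tau> a b c)) \<Longrightarrow>
   (\<And>a b. hom s3 (*) (\<lambda>c. \<tau> a b c)) \<Longrightarrow> tril s1 s2 s3 \<tau>"
  by (auto simp: tril_def)

context hopf begin

lemma lemE:
  assumes b: "bil s s (*) \<gamma>"
  shows "sw (D z) (\<lambda>a b. sw (D a) (\<lambda>a1 a2. sw (D b) (\<lambda>b1 b2. \<gamma> (a1 * S b2) (a2 * S b1)))) = eps z * \<gamma> 1 1"
proof -
  have g1: "\<And>b. hom s (*) (\<lambda>a. \<gamma> a b)" and g2: "\<And>a. hom s (*) (\<lambda>b. \<gamma> a b)"
    using b by (auto simp: bil_def)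
  define \<tau>1 where "\<tau>1 a b1 b2 = sw (D a) (\<lambda>a1 a2. \<gamma> (a1 * S b2) (a2 * S b1))" for a b1 b2
  have t1: "tril s s s \<tau>1"
    unfolding \<tau>1_def
  proof (rule trilI)
    fix b1 b2 show "hom s (*) (\<lambda>a. sw (D a) (\<lambda>a1 a2. \<gamma> (a1 * S b2) (a2 * S b1)))"
      by (rule DL[OF bilI vs_field]) (auto intro: hom_comp[OF hom_multR g1] hom_comp[OF hom_multR g2])
  next
    fix a b2 show "hom s (*) (\<lambda>b1. sw (D a) (\<lambda>a1 a2. \<gamma> (a1 * S b2) (a2 * S b1)))"
      by (rule hom_sw_fun[OF vs_field]) (auto intro: hom_comp[OF hom_comp[OF S_hom hom_multL] g2])
  next
    fix a b1 show "hom s (*) (\<lambda>b2. sw (D a) (\<lambda>a1 a2. \<gamma> (a1 * S b2) (a2 * S b1)))"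
      by (rule hom_sw_fun[OF vs_field]) (auto intro: hom_comp[OF hom_comp[OF S_hom hom_multL] g1])
  qed
  have "sw (D z) (\<lambda>a b. sw (D a) (\<lambda>a1 a2. sw (D b) (\<lambda>b1 b2. \<gamma> (a1 * S b2) (a2 * S b1))))
      = sw (D z) (\<lambda>a b. sw (D b) (\<lambda>b1 b2. \<tau>1 a b1 b2))"
    unfolding \<tau>1_def by (intro sw_cong sw_swap)
  also have "\<dots> = sw (D z) (\<lambda>a b. sw (D a) (\<lambda>a1 a2. \<tau>1 a1 a2 b))"
    by (rule CA[OF t1, symmetric])
  also have "\<dots> = sw (D z) (\<lambda>a b. sw (D a) (\<lambda>a1 a2. sw (D a2) (\<lambda>v w. \<gamma> (a1 * S b) (v * S w))))"
  proof (rule sw_cong)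
    fix a b
    have t2: "tril s s s (\<lambda>u v w. \<gamma> (u * S b) (v * S w))"
    proof (rule trilI)
      fix v w show "hom s (*) (\<lambda>u. \<gamma> (u * S b) (v * S w))" by (rule hom_comp[OF hom_multR g1])
    next
      fix u w show "hom s (*) (\<lambda>v. \<gamma> (u * S b) (v * S w))" by (rule hom_comp[OF hom_multR g2])
    next
      fix u v show "hom s (*) (\<lambda>w. \<gamma> (u * S b) (v * S w))" by (rule hom_comp[OF hom_comp[OF S_hom hom_multL] g2])
    qed
    show "sw (D a) (\<lambda>a1 a2. \<tau>1 a1 a2 b) = sw (D a) (\<lambda>a1 a2. sw (D a2) (\<lambda>v w. \<gamma> (a1 * S b) (v * S w)))"
      unfolding \<tau>1_def using CA[OF t2, of a] by simp
  qed
  also have "\<dots> = sw (D z) (\<lambda>a b. sw (D a) (\<lambda>a1 a2. \<gamma> (a1 * S b) 1 * eps a2))"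
  proof (intro sw_cong)
    fix a b a1 a2
    have "sw (D a2) (\<lambda>v w. \<gamma> (a1 * S b) (v * S w)) = \<gamma> (a1 * S b) (sw (D a2) (\<lambda>v w. v * S w))"
      by (rule hom_sw[OF g2, symmetric])
    also have "\<dots> = \<gamma> (a1 * S b) 1 * eps a2"
      using homD(2)[OF g2] by (simp add: antiR mult.commute)
    finally show "sw (D a2) (\<lambda>v w. \<gamma> (a1 * S b) (v * S w)) = \<gamma> (a1 * S b) 1 * eps a2" .
  qed
  also have "\<dots> = sw (D z) (\<lambda>a b. \<gamma> (a * S b) 1)"
    by (intro sw_cong counitRk hom_comp[OF hom_multR g1])
  also have "\<dots> = \<gamma> (sw (D z) (\<lambda>a b. a * S b)) 1"
    by (rule hom_sw[OF g1, symmetric])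
  also have "\<dots> = eps z * \<gamma> 1 1"
    using homD(2)[OF g1] by (simp add: antiR)
  finally show ?thesis .
qed

lemma AC:
  assumes al: "hom s (*) \<alpha>" and be: "hom s (*) \<beta>"
  shows "sw (D (S y)) (\<lambda>c d. \<alpha> c * \<beta> d) = sw (D y) (\<lambda>a b. \<alpha> (S b) * \<beta> (S a))"
proof -
  define G where "G u = sw (D u) (\<lambda>c d. \<alpha> c * \<beta> d)" for u
  have bG: "bil s s (*) (\<lambda>c d. \<alpha> c * \<beta> d)"
    by (intro bilI lin_mult_right lin_mult_left al be)
  have lG: "hom s (*) G" unfolding G_def by (rule DL[OF bG vs_field])
  define \<gamma> where "\<gamma> a c d = sw (D (S a)) (\<lambda>u1 u2. \<alpha> (u1 * c) * \<beta> (u2 * d))" for a c d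
  have bu: "bil s s (*) (\<lambda>u1 u2. \<alpha> (u1 * c) * \<beta> (u2 * d))" for c d
    by (intro bilI lin_mult_right lin_mult_left hom_comp[OF hom_multR al] hom_comp[OF hom_multR be])
  have bg: "bil s s (*) (\<gamma> a)" for a
    unfolding \<gamma>_def
    by (intro bilI hom_sw_fun[OF vs_field] lin_mult_right lin_mult_left
        hom_comp[OF hom_multL al] hom_comp[OF hom_multL be])
  have ga: "hom s (*) (\<lambda>a. \<gamma> a c d)" for c d
    unfolding \<gamma>_def by (rule hom_comp[OF S_hom DL[OF bu vs_field]])
  have g1: "hom s (*) (\<lambda>c. \<gamma> a c d)" and g2: "hom s (*) (\<lambda>d. \<gamma> a c d)" for a c d
    using bilD[OF bg] by auto
  define T where "T a b' b'' = sw (D b') (\<lambda>b1 b2. sw (D b'') (\<lambda>b3 b4. \<gamma> a (b1 * S b4) (b2 * S b3)))"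
    for a b' b''
  have tT: "tril s s s T"
    unfolding T_def
  proof (rule trilI)
    fix b' b'' show "hom s (*) (\<lambda>a. sw (D b') (\<lambda>b1 b2. sw (D b'') (\<lambda>b3 b4. \<gamma> a (b1 * S b4) (b2 * S b3))))"
      by (intro hom_sw_fun[OF vs_field] ga)
  next
    fix a b'' show "hom s (*) (\<lambda>b'. sw (D b') (\<lambda>b1 b2. sw (D b'') (\<lambda>b3 b4. \<gamma> a (b1 * S b4) (b2 * S b3))))"
      by (intro DL[OF bilI vs_field] hom_sw_fun[OF vs_field] hom_comp[OF hom_multR g1] hom_comp[OF hom_multR g2])
  next
    fix a b' show "hom s (*) (\<lambda>b''. sw (D b') (\<lambda>b1 b2. sw (D b'') (\<lambda>b3 b4. \<gamma> a (b1 * S b4) (b2 * S b3))))"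
      by (intro hom_sw_fun[OF vs_field] DL[OF bilI vs_field] hom_comp[OF hom_comp[OF S_hom hom_multL] g1]
          hom_comp[OF hom_comp[OF S_hom hom_multL] g2])
  qed
  define H where "H b = sw (D b) (\<lambda>b3 b4. \<alpha> (S b4) * \<beta> (S b3))" for b
  have lH: "hom s (*) H"
    unfolding H_def by (intro DL[OF bilI vs_field] lin_mult_right lin_mult_left hom_comp[OF S_hom al] hom_comp[OF S_hom be])
  have "G (S y) = sw (D y) (\<lambda>a b. G (S a) * eps b)"
    by (rule counitRk[OF hom_comp[OF S_hom lG], symmetric])
  also have "\<dots> = sw (D y) (\<lambda>a b. sw (D b) (\<lambda>b' b''. T a b' b''))"
  proof (rule sw_cong)
    fix a b
    have "G (S a) = \<gamma> a 1 1" by (simp add: \<gamma>_def G_def)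
    then show "G (S a) * eps b = sw (D b) (\<lambda>b' b''. T a b' b'')"
      using lemE[OF bg, of b a] by (simp add: T_def mult.commute)
  qed
  also have "\<dots> = sw (D y) (\<lambda>m b''. sw (D m) (\<lambda>a b'. T a b' b''))"
    by (rule CA[OF tT, symmetric])
  also have "\<dots> = sw (D y) (\<lambda>m b''. eps m * H b'')"
  proof (rule sw_cong)
    fix m b''
    have "sw (D m) (\<lambda>a b'. T a b' b'')
        = sw (D m) (\<lambda>a b'. sw (D b'') (\<lambda>b3 b4. sw (D b') (\<lambda>b1 b2. \<gamma> a (b1 * S b4) (b2 * S b3))))"
      unfolding T_def by (intro sw_cong sw_swap)
    also have "\<dots> = sw (D b'') (\<lambda>b3 b4. sw (D m) (\<lambda>a b'. sw (D b') (\<lambda>b1 b2. \<gamma> a (b1 * S b4) (b2 * S b3))))"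
      by (rule sw_swap)
    also have "\<dots> = sw (D b'') (\<lambda>b3 b4. eps m * (\<alpha> (S b4) * \<beta> (S b3)))"
    proof (rule sw_cong)
      fix b3 b4
      define \<kappa> where "\<kappa> c d = \<alpha> (c * S b4) * \<beta> (d * S b3)" for c d
      have bk: "bil s s (*) \<kappa>"
        unfolding \<kappa>_def by (intro bilI lin_mult_right lin_mult_left hom_comp[OF hom_multR al] hom_comp[OF hom_multR be])
      have lk: "hom s (*) (\<lambda>u. sw (D u) \<kappa>)" by (rule DL[OF bk vs_field])
      have "sw (D m) (\<lambda>a b'. sw (D b') (\<lambda>b1 b2. \<gamma> a (b1 * S b4) (b2 * S b3)))
          = sw (D m) (\<lambda>a b'. sw (D (S a * b')) \<kappa>)"
      proof (rule sw_cong)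
        fix a b'
        have "sw (D b') (\<lambda>b1 b2. \<gamma> a (b1 * S b4) (b2 * S b3))
            = sw (D b') (\<lambda>b1 b2. sw (D (S a)) (\<lambda>u1 u2. \<kappa> (u1 * b1) (u2 * b2)))"
          by (simp add: \<gamma>_def \<kappa>_def mult.assoc)
        also have "\<dots> = sw (D (S a)) (\<lambda>u1 u2. sw (D b') (\<lambda>b1 b2. \<kappa> (u1 * b1) (u2 * b2)))"
          by (rule sw_swap)
        also have "\<dots> = sw (D (S a * b')) \<kappa>"
          using DT[OF bk vs_field D_mult[of "S a" b']] by simp
        finally show "sw (D b') (\<lambda>b1 b2. \<gamma> a (b1 * S b4) (b2 * S b3)) = sw (D (S a * b')) \<kappa>" .
      qed
      also have "\<dots> = sw (D (sw (D m) (\<lambda>a b'. S a * b'))) \<kappa>"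
        by (rule hom_sw[OF lk, symmetric])
      also have "\<dots> = eps m * sw (D 1) \<kappa>"
        using homD(2)[OF lk] by (simp add: antiL)
      also have "\<dots> = eps m * (\<alpha> (S b4) * \<beta> (S b3))"
        using DT[OF bk vs_field D_one] by (simp add: \<kappa>_def)
      finally show "sw (D m) (\<lambda>a b'. sw (D b') (\<lambda>b1 b2. \<gamma> a (b1 * S b4) (b2 * S b3)))
          = eps m * (\<alpha> (S b4) * \<beta> (S b3))" .
    qed
    also have "\<dots> = eps m * H b''"
      by (simp add: H_def sw_mult_left)
    finally show "sw (D m) (\<lambda>a b'. T a b' b'') = eps m * H b''" .
  qed
  also have "\<dots> = H y" by (rule counitLk[OF lH])
  finally show ?thesis by (simp add: G_def H_def)
qed

end



locale hmor = A: hopf sA DA eA SA + B: hopf sB DB eB SB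
  for sA :: "'k::field \<Rightarrow> 'a::ring_1 \<Rightarrow> 'a" and DA eA SA
    and sB :: "'k \<Rightarrow> 'b::ring_1 \<Rightarrow> 'b" and DB eB SB +
  fixes p :: "'a \<Rightarrow> 'b"
  assumes M: "hopf_morphism sA DA eA sB DB eB p"
begin

lemma p_hom: "hom sA sB p" and p_mult: "p (x * y) = p x * p y" and p_one: "p 1 = 1"
  and eps_p: "eB (p x) = eA x"
  and Dp: "tensor_eq sB sB (DB (p x)) (map (\<lambda>(a,b). (p a, p b)) (DA x))"
  using M A.vs B.vs by (auto simp: hopf_morphism_def linear_iff_hom)

lemma PS: "SB (p x) = p (SA x)"
proof (rule separation[OF B.vs])
  fix \<theta> assume th: "hom sB (*) \<theta>"
  define f where "f z = \<theta> (SB (p z))" for z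
  have lf: "hom sA (*) f" unfolding f_def by (intro hom_comp[OF hom_comp[OF p_hom B.S_hom] th])
  have hm: "hom sA (*) (\<lambda>z. \<theta> (SB (p a) * p z))" for a
    by (intro hom_comp[OF hom_comp[OF p_hom B.hom_multL] th])
  define \<tau> where "\<tau> u v w = \<theta> (SB (p u) * (p v * p (SA w)))" for u v w
  have t: "tril sA sA sA \<tau>"
    unfolding \<tau>_def
  proof (rule trilI)
    fix v w show "hom sA (*) (\<lambda>u. \<theta> (SB (p u) * (p v * p (SA w))))"
      by (intro hom_comp[OF hom_comp[OF hom_comp[OF p_hom B.S_hom] B.hom_multR] th])
  next
    fix u w show "hom sA (*) (\<lambda>v. \<theta> (SB (p u) * (p v * p (SA w))))"
      by (intro hom_comp[OF hom_comp[OF hom_comp[OF p_hom B.hom_multR] B.hom_multL] th])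
  next
    fix u v show "hom sA (*) (\<lambda>w. \<theta> (SB (p u) * (p v * p (SA w))))"
      by (intro hom_comp[OF hom_comp[OF hom_comp[OF hom_comp[OF A.S_hom p_hom] B.hom_multL] B.hom_multL] th])
  qed
  have "f x = sw (DA x) (\<lambda>a b. f a * eA b)"
    by (rule A.counitRk[OF lf, symmetric])
  also have "\<dots> = sw (DA x) (\<lambda>a b. sw (DA b) (\<lambda>b1 b2. \<tau> a b1 b2))"
  proof (rule sw_cong)
    fix a b
    have "f a * eA b = \<theta> (SB (p a) * p (sA (eA b) 1))"
      using homD(2)[OF p_hom] homD(2)[OF th] by (simp add: f_def p_one mult.commute)
    also have "\<dots> = \<theta> (SB (p a) * p (sw (DA b) (\<lambda>b1 b2. b1 * SA b2)))"
      by (simp add: A.antiR)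
    also have "\<dots> = sw (DA b) (\<lambda>b1 b2. \<tau> a b1 b2)"
      by (simp add: hom_sw[OF hm] \<tau>_def p_mult)
    finally show "f a * eA b = sw (DA b) (\<lambda>b1 b2. \<tau> a b1 b2)" .
  qed
  also have "\<dots> = sw (DA x) (\<lambda>a b. sw (DA a) (\<lambda>a1 a2. \<tau> a1 a2 b))"
    by (rule A.CA[OF t, symmetric])
  also have "\<dots> = sw (DA x) (\<lambda>a b. eA a * \<theta> (p (SA b)))"
  proof (rule sw_cong)
    fix a b
    define w where "w = p (SA b)"
    have bb: "bil sB sB (*) (\<lambda>c d. \<theta> (SB c * (d * w)))"
      by (intro bilI hom_comp[OF hom_comp[OF B.S_hom B.hom_multR] th] hom_comp[OF hom_comp[OF B.hom_multR B.hom_multL] th])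
    have hw: "hom sB (*) (\<lambda>z. \<theta> (z * w))" by (intro hom_comp[OF B.hom_multR th])
    have "sw (DA a) (\<lambda>a1 a2. \<tau> a1 a2 b) = sw (map (\<lambda>(a,b). (p a, p b)) (DA a)) (\<lambda>c d. \<theta> (SB c * (d * w)))"
      by (simp add: \<tau>_def w_def)
    also have "\<dots> = sw (DB (p a)) (\<lambda>c d. \<theta> (SB c * (d * w)))"
      by (rule B.DT[OF bb vs_field Dp, symmetric])
    also have "\<dots> = \<theta> (sw (DB (p a)) (\<lambda>c d. SB c * d) * w)"
      by (simp add: hom_sw[OF hw] mult.assoc)
    also have "\<dots> = eA a * \<theta> w"
      using homD(2)[OF th] by (simp add: B.antiL eps_p)
    finally show "sw (DA a) (\<lambda>a1 a2. \<tau> a1 a2 b) = eA a * \<theta> (p (SA b))" by (simp add: w_def)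
  qed
  also have "\<dots> = \<theta> (p (SA x))"
    by (rule A.counitLk[OF hom_comp[OF hom_comp[OF A.S_hom p_hom] th]])
  finally show "\<theta> (SB (p x)) = \<theta> (p (SA x))" by (simp add: f_def)
qed

end



lemma subspace_iff: "vector_space s \<Longrightarrow> module.subspace s U \<longleftrightarrow> 0 \<in> U \<and> (\<forall>x\<in>U. \<forall>y\<in>U. x + y \<in> U) \<and> (\<forall>c. \<forall>x\<in>U. s c x \<in> U)"
  by (simp add: module.subspace_def vs_module)

lemma in_tensor_left_iff:
  assumes vs1: "vector_space s1" and vs2: "vector_space s2" and U: "module.subspace s1 U"
  shows "in_tensor_left s1 s2 U t \<longleftrightarrow>
    (\<forall>\<phi> \<psi>. hom s1 (*) \<phi> \<longrightarrow> (\<forall>u\<in>U. \<phi> u = 0) \<longrightarrow> hom s2 (*) \<psi> \<longrightarrow> sw t (\<lambda>a b. \<phi> a * \<psi> b) = 0)"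
proof safe
  fix \<phi> \<psi> assume it: "in_tensor_left s1 s2 U t" and ph: "hom s1 (*) \<phi>" and z: "\<forall>u\<in>U. \<phi> u = 0"
    and ps: "hom s2 (*) \<psi>"
  obtain ys where ys: "fst ` set ys \<subseteq> U" "tensor_eq s1 s2 t ys" using it by (auto simp: in_tensor_left_def)
  have "sw t (\<lambda>a b. \<phi> a * \<psi> b) = sw ys (\<lambda>a b. \<phi> a * \<psi> b)" by (rule tensor_eqD[OF ys(2) vs1 vs2 ph ps])
  also have "\<dots> = sw ys (\<lambda>a b. 0)" by (rule sw_cong) (use ys(1) z in force)
  finally show "sw t (\<lambda>a b. \<phi> a * \<psi> b) = 0" by simp
next
  assume H: "\<forall>\<phi> \<psi>. hom s1 (*) \<phi> \<longrightarrow> (\<forall>u\<in>U. \<phi> u = 0) \<longrightarrow> hom s2 (*) \<psi> \<longrightarrow> sw t (\<lambda>a b. \<phi> a * \<psi> b) = 0"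
  obtain Q where Q: "hom s1 s1 Q" "\<And>x. Q x \<in> U" "\<And>u. u \<in> U \<Longrightarrow> Q u = u"
    using projection[OF vs1 U] by blast
  show "in_tensor_left s1 s2 U t"
    unfolding in_tensor_left_def
  proof (intro exI conjI)
    show "fst ` set (map (\<lambda>(a,b). (Q a, b)) t) \<subseteq> U" using Q(2) by auto
    show "tensor_eq s1 s2 t (map (\<lambda>(a,b). (Q a, b)) t)"
    proof (rule tensor_eqI[OF vs1 vs2])
      fix \<phi> \<psi> assume ph: "hom s1 (*) \<phi>" and ps: "hom s2 (*) \<psi>"
      have h: "hom s1 (*) (\<lambda>z. \<phi> z - \<phi> (Q z))"
        by (intro hom_diff_fun[OF vs_field] ph hom_comp[OF Q(1) ph])
      have "sw t (\<lambda>a b. (\<phi> a - \<phi> (Q a)) * \<psi> b) = 0"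
        using H h ps Q(3) by auto
      then show "sw t (\<lambda>a b. \<phi> a * \<psi> b) = sw (map (\<lambda>(a,b). (Q a, b)) t) (\<lambda>a b. \<phi> a * \<psi> b)"
        by (simp add: left_diff_distrib sw_diff)
    qed
  qed
qed

lemma ann_sep:
  assumes vs: "vector_space s" and U: "module.subspace s U"
    and H: "\<And>\<phi>. hom s (*) \<phi> \<Longrightarrow> (\<forall>u\<in>U. \<phi> u = 0) \<Longrightarrow> \<phi> v = 0"
  shows "v \<in> U"
proof -
  obtain Q where Q: "hom s s Q" "\<And>x. Q x \<in> U" "\<And>u. u \<in> U \<Longrightarrow> Q u = u"
    using projection[OF vs U] by blast
  have "v - Q v = 0"
  proof (rule separation[OF vs])
    fix \<theta> assume th: "hom s (*) \<theta>"
    have h: "hom s (*) (\<lambda>z. \<theta> z - \<theta> (Q z))"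
      by (intro hom_diff_fun[OF vs_field] th hom_comp[OF Q(1) th])
    have "\<theta> v - \<theta> (Q v) = 0" using H[OF h] Q(3) by auto
    then show "\<theta> (v - Q v) = \<theta> 0" using hom_diff[OF th] hom_0[OF th] by simp
  qed
  then show ?thesis using Q(2)[of v] by simp
qed

lemma in_tensor_left_mono: "U \<subseteq> U' \<Longrightarrow> in_tensor_left s1 s2 U t \<Longrightarrow> in_tensor_left s1 s2 U' t"
  by (auto simp: in_tensor_left_def)

lemma h_inverse_mono: "C \<subseteq> C' \<Longrightarrow> h_inverse sA DA sB eB p C \<subseteq> h_inverse sA DA sB eB p C'"
  unfolding h_inverse_def
  by (auto intro: in_tensor_left_mono[rotated] simp: aug_ideal_def)

context hmor begin

lemma sw_hinv: "hom sB (*) \<phi> \<Longrightarrow>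
  sw (map (\<lambda>(a,b). (p a, b)) (DA x) @ [(- 1, x)]) (\<lambda>a b. \<phi> a * \<psi> b)
  = sw (DA x) (\<lambda>a b. \<phi> (p a) * \<psi> b) - \<phi> 1 * \<psi> x"
  by (simp add: hom_neg)

lemma part2:
  assumes D: "hopf_subalgebra sA DA SA D"
  shows "D \<subseteq> h_inverse sA DA sB eB p (p ` D)"
proof
  fix x assume x: "x \<in> D"
  have sD: "module.subspace sA D" and oD: "1 \<in> D" and tD: "in_tensor sA sA D D (DA x)"
    using D x by (auto simp: hopf_subalgebra_def)
  obtain ys where ys: "fst ` set ys \<subseteq> D" "tensor_eq sA sA (DA x) ys"
    using tD by (auto simp: in_tensor_def)
  let ?zs = "map (\<lambda>(a,b). (p a - sB (eA a) 1, b)) ys"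
  have "in_tensor_left sB sA (aug_ideal eB (p ` D)) (map (\<lambda>(a,b). (p a, b)) (DA x) @ [(- 1, x)])"
    unfolding in_tensor_left_def
  proof (intro exI conjI)
    show "fst ` set ?zs \<subseteq> aug_ideal eB (p ` D)"
    proof clarsimp
      fix a b assume ab: "(a, b) \<in> set ys"
      then have a: "a \<in> D" using ys(1) by force
      have e: "a - sA (eA a) 1 \<in> D"
        using sD a oD unfolding subspace_iff[OF A.vs]
        by (metis A.scale_minus_left diff_conv_add_uminus)
      have "p a - sB (eA a) 1 = p (a - sA (eA a) 1)"
        by (simp add: hom_diff[OF p_hom] homD(2)[OF p_hom] p_one)
      moreover have "eB (p a - sB (eA a) 1) = 0"
        using hom_diff[OF B.eps_lin] by (simp add: eps_p B.eps_one)
      ultimately show "p a - sB (eA a) 1 \<in> aug_ideal eB (p ` D)"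
        using e by (auto simp: aug_ideal_def)
    qed
    show "tensor_eq sB sA (map (\<lambda>(a,b). (p a, b)) (DA x) @ [(- 1, x)]) ?zs"
    proof (rule tensor_eqI[OF B.vs A.vs])
      fix \<phi> \<psi> assume ph: "hom sB (*) \<phi>" and ps: "hom sA (*) \<psi>"
      have 1: "sw (DA x) (\<lambda>a b. \<phi> (p a) * \<psi> b) = sw ys (\<lambda>a b. \<phi> (p a) * \<psi> b)"
        by (rule tensor_eqD[OF ys(2) A.vs A.vs hom_comp[OF p_hom ph] ps])
      have 2: "\<psi> x = sw ys (\<lambda>a b. eA a * \<psi> b)"
        using A.counitLk[OF ps, of x] tensor_eqD[OF ys(2) A.vs A.vs A.eps_lin ps] by simp
      have "sw ?zs (\<lambda>a b. \<phi> a * \<psi> b) = sw ys (\<lambda>a b. \<phi> (p a) * \<psi> b - \<phi> 1 * (eA a * \<psi> b))"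
        by (simp add: hom_diff[OF ph] homD(2)[OF ph] left_diff_distrib mult.assoc mult.left_commute)
      also have "\<dots> = sw (DA x) (\<lambda>a b. \<phi> (p a) * \<psi> b) - \<phi> 1 * \<psi> x"
        using 1 2 by (simp add: sw_diff sw_mult_left)
      finally show "sw (map (\<lambda>(a,b). (p a, b)) (DA x) @ [(- 1, x)]) (\<lambda>a b. \<phi> a * \<psi> b) = sw ?zs (\<lambda>a b. \<phi> a * \<psi> b)"
        by (simp add: hom_neg[OF ph])
    qed
  qed
  then show "x \<in> h_inverse sA DA sB eB p (p ` D)" by (simp add: h_inverse_def)
qed

end




locale mainloc = hmor +
  fixes C
  assumes cA: "cocommutative sA DA" and HC: "hopf_subalgebra sB DB SB C"
begin

abbreviation "Cp \<equiv> aug_ideal eB C"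
abbreviation "H \<equiv> h_inverse sA DA sB eB p C"

lemma C_sub: "module.subspace sB C" and one_C: "1 \<in> C" and mult_C: "u \<in> C \<Longrightarrow> w \<in> C \<Longrightarrow> u * w \<in> C"
  and S_C: "u \<in> C \<Longrightarrow> SB u \<in> C"
  using HC by (auto simp: hopf_subalgebra_def)

lemma Cp_sub: "module.subspace sB Cp"
  using C_sub unfolding subspace_iff[OF B.vs] aug_ideal_def by (auto simp: hom_0[OF B.eps_lin])

lemma Cp_C: "u \<in> Cp \<Longrightarrow> u \<in> C" and Cp_eps: "u \<in> Cp \<Longrightarrow> eB u = 0"
  by (auto simp: aug_ideal_def)

lemma Cp_mult: "u \<in> Cp \<Longrightarrow> w \<in> C \<Longrightarrow> u * w \<in> Cp"
  by (auto simp: aug_ideal_def mult_C B.eps_mult)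

lemma Cp_multL: "u \<in> C \<Longrightarrow> w \<in> Cp \<Longrightarrow> u * w \<in> Cp"
  by (auto simp: aug_ideal_def mult_C B.eps_mult)

lemma Cp_S: "u \<in> Cp \<Longrightarrow> SB u \<in> Cp"
  by (auto simp: aug_ideal_def S_C B.eps_S)

lemma cc: "hom sA (*) f \<Longrightarrow> hom sA (*) g \<Longrightarrow> sw (DA x) (\<lambda>a b. f a * g b) = sw (DA x) (\<lambda>a b. f b * g a)"
  using tensor_eqD[OF cA[unfolded cocommutative_def, rule_format, of x] A.vs A.vs, of f g] by simp

lemma H_char: "x \<in> H \<longleftrightarrow> (\<forall>\<phi> \<psi>. hom sB (*) \<phi> \<longrightarrow> (\<forall>u\<in>Cp. \<phi> u = 0) \<longrightarrow> hom sA (*) \<psi> \<longrightarrow>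
    sw (DA x) (\<lambda>a b. \<phi> (p a) * \<psi> b) = \<phi> 1 * \<psi> x)"
  unfolding h_inverse_def mem_Collect_eq in_tensor_left_iff[OF B.vs A.vs Cp_sub]
  by (simp add: hom_neg)

lemma H_charI: "(\<And>\<phi> \<psi>. hom sB (*) \<phi> \<Longrightarrow> (\<forall>u\<in>Cp. \<phi> u = 0) \<Longrightarrow> hom sA (*) \<psi> \<Longrightarrow>
    sw (DA x) (\<lambda>a b. \<phi> (p a) * \<psi> b) = \<phi> 1 * \<psi> x) \<Longrightarrow> x \<in> H"
  using H_char by blast

lemma H_charD: "x \<in> H \<Longrightarrow> hom sB (*) \<phi> \<Longrightarrow> (\<forall>u\<in>Cp. \<phi> u = 0) \<Longrightarrow> hom sA (*) \<psi> \<Longrightarrow>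
    sw (DA x) (\<lambda>a b. \<phi> (p a) * \<psi> b) = \<phi> 1 * \<psi> x"
  using H_char by blast

lemma Wit: assumes "x \<in> H"
  shows "\<exists>ys. fst ` set ys \<subseteq> Cp \<and> (\<forall>\<beta>. bil sB sA (*) \<beta> \<longrightarrow> sw (DA x) (\<lambda>a b. \<beta> (p a) b) = \<beta> 1 x + sw ys \<beta>)"
proof -
  obtain ys where ys: "fst ` set ys \<subseteq> Cp" "tensor_eq sB sA (map (\<lambda>(a,b). (p a, b)) (DA x) @ [(- 1, x)]) ys"
    using assms by (auto simp: h_inverse_def in_tensor_left_def)
  have "sw (DA x) (\<lambda>a b. \<beta> (p a) b) = \<beta> 1 x + sw ys \<beta>" if b: "bil sB sA (*) \<beta>" for \<beta>
  proof -
    have "sw (map (\<lambda>(a,b). (p a, b)) (DA x) @ [(- 1, x)]) \<beta> = sw ys \<beta>"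
      by (rule transport2[OF B.vs A.vs ys(2)]) (use b in \<open>auto simp: bil_def\<close>)
    then have "sw (DA x) (\<lambda>a b. \<beta> (p a) b) - \<beta> 1 x = sw ys \<beta>"
      using hom_neg[OF bilD(1)[OF b, of x]] by simp
    then show ?thesis by (simp add: algebra_simps)
  qed
  then show ?thesis using ys(1) by blast
qed

lemma part1: "x \<in> H \<Longrightarrow> p x \<in> C"
proof -
  assume x: "x \<in> H"
  have "p x - sB (eA x) 1 \<in> Cp"
  proof (rule ann_sep[OF B.vs Cp_sub])
    fix \<phi> assume ph: "hom sB (*) \<phi>" and z: "\<forall>u\<in>Cp. \<phi> u = 0"
    have "\<phi> (p x) = sw (DA x) (\<lambda>a b. \<phi> (p a) * eA b)"
      by (rule A.counitRk[OF hom_comp[OF p_hom ph], symmetric])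
    also have "\<dots> = \<phi> 1 * eA x" by (rule H_charD[OF x ph z A.eps_lin])
    finally show "\<phi> (p x - sB (eA x) 1) = 0"
      by (simp add: hom_diff[OF ph] homD(2)[OF ph] mult.commute)
  qed
  then have "p x - sB (eA x) 1 + sB (eA x) 1 \<in> C"
    using Cp_C C_sub one_C unfolding subspace_iff[OF B.vs] by blast
  then show "p x \<in> C" by simp
qed

lemma H_sub: "module.subspace sA H"
  unfolding subspace_iff[OF A.vs]
proof (intro conjI ballI allI)
  have G: "hom sA (*) (\<lambda>u. sw (DA u) (\<lambda>a b. \<phi> (p a) * \<psi> b))" if "hom sB (*) \<phi>" "hom sA (*) \<psi>" for \<phi> \<psi>
    by (intro A.DL[OF bilI vs_field] lin_mult_right lin_mult_left hom_comp[OF p_hom] that)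
  show "0 \<in> H"
    by (rule H_charI) (simp add: hom_0[OF G] hom_0)
  show "x + y \<in> H" if "x \<in> H" "y \<in> H" for x y
    by (rule H_charI) (simp add: homD[OF G] homD H_charD[OF that(1)] H_charD[OF that(2)] ring_distribs)
  show "sA c x \<in> H" if "x \<in> H" for x c
    by (rule H_charI) (simp add: homD[OF G] homD H_charD[OF that(1)] mult.left_commute)
qed

lemma one_H: "1 \<in> H"
proof (rule H_charI)
  fix \<phi> \<psi> assume ph: "hom sB (*) \<phi>" and ps: "hom sA (*) \<psi>"
  have b: "bil sA sA (*) (\<lambda>a b. \<phi> (p a) * \<psi> b)"
    by (intro bilI lin_mult_right lin_mult_left hom_comp[OF p_hom] ph ps)
  show "sw (DA 1) (\<lambda>a b. \<phi> (p a) * \<psi> b) = \<phi> 1 * \<psi> 1"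
    using A.DT[OF b vs_field A.D_one] by (simp add: p_one)
qed

lemma mult_H: assumes x: "x \<in> H" and y: "y \<in> H" shows "x * y \<in> H"
proof (rule H_charI)
  fix \<phi> \<psi> assume ph: "hom sB (*) \<phi>" and z: "\<forall>u\<in>Cp. \<phi> u = 0" and ps: "hom sA (*) \<psi>"
  obtain ys where ys: "fst ` set ys \<subseteq> Cp"
    "\<And>\<beta>. bil sB sA (*) \<beta> \<Longrightarrow> sw (DA x) (\<lambda>a b. \<beta> (p a) b) = \<beta> 1 x + sw ys \<beta>"
    using Wit[OF x] by blast
  obtain zs where zs: "fst ` set zs \<subseteq> Cp"
    "\<And>\<beta>. bil sB sA (*) \<beta> \<Longrightarrow> sw (DA y) (\<lambda>a b. \<beta> (p a) b) = \<beta> 1 y + sw zs \<beta>"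
    using Wit[OF y] by blast
  have bb: "bil sB sA (*) (\<lambda>u v. \<phi> (w1 * u * w2) * \<psi> (v1 * v * v2))" for w1 w2 v1 v2
    by (intro bilI lin_mult_right lin_mult_left hom_comp[OF hom_comp[OF B.hom_multL B.hom_multR] ph]
        hom_comp[OF hom_comp[OF A.hom_multL A.hom_multR] ps])
  have b0: "bil sA sA (*) (\<lambda>a b. \<phi> (p a) * \<psi> b)"
    by (intro bilI lin_mult_right lin_mult_left hom_comp[OF p_hom] ph ps)
  have zs0: "sw zs (\<lambda>w d. \<phi> (u * w * 1) * \<psi> (v * d * 1)) = 0" if u: "u \<in> C" for u v
  proof -
    have "sw zs (\<lambda>w d. \<phi> (u * w * 1) * \<psi> (v * d * 1)) = sw zs (\<lambda>w d. 0)"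
    proof (rule sw_cong)
      fix w d assume "(w, d) \<in> set zs"
      then have "w \<in> Cp" using zs(1) by force
      then have "u * w \<in> Cp" using Cp_multL u by blast
      then show "\<phi> (u * w * 1) * \<psi> (v * d * 1) = 0" using z by simp
    qed
    then show ?thesis by simp
  qed
  have "sw (DA (x * y)) (\<lambda>a b. \<phi> (p a) * \<psi> b)
      = sw (DA x) (\<lambda>a b. sw (DA y) (\<lambda>c d. \<phi> (1 * p a * p c) * \<psi> (1 * b * d)))"
    using A.DT[OF b0 vs_field A.D_mult] by (simp add: p_mult)
  also have "\<dots> = sw (DA y) (\<lambda>c d. sw (DA x) (\<lambda>a b. \<phi> (1 * p a * p c) * \<psi> (1 * b * d)))"
    by (rule sw_swap)
  also have "\<dots> = sw (DA y) (\<lambda>c d. \<phi> (1 * 1 * p c) * \<psi> (1 * x * d) + sw ys (\<lambda>u v. \<phi> (1 * u * p c) * \<psi> (1 * v * d)))"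
    by (rule sw_cong) (rule ys(2)[OF bb])
  also have "\<dots> = sw (DA y) (\<lambda>c d. \<phi> (1 * p c * 1) * \<psi> (x * d * 1)) + sw ys (\<lambda>u v. sw (DA y) (\<lambda>c d. \<phi> (u * p c * 1) * \<psi> (v * d * 1)))"
    by (simp add: sw_add sw_swap[of ys])
  also have "\<dots> = \<phi> 1 * \<psi> (x * y)"
  proof -
    have "sw (DA y) (\<lambda>c d. \<phi> (1 * p c * 1) * \<psi> (x * d * 1)) = \<phi> 1 * \<psi> (x * y) + sw zs (\<lambda>w d. \<phi> (1 * w * 1) * \<psi> (x * d * 1))"
      using zs(2)[OF bb, of 1 1 x 1] by simp
    also have "\<dots> = \<phi> 1 * \<psi> (x * y)" using zs0[OF one_C, of x] by simp
    finally have 1: "sw (DA y) (\<lambda>c d. \<phi> (1 * p c * 1) * \<psi> (x * d * 1)) = \<phi> 1 * \<psi> (x * y)" .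
    have 2: "sw ys (\<lambda>u v. sw (DA y) (\<lambda>c d. \<phi> (u * p c * 1) * \<psi> (v * d * 1))) = 0"
    proof (rule trans[OF sw_cong sw_zero])
      fix u v assume uv: "(u, v) \<in> set ys"
      then have u: "u \<in> Cp" using ys(1) by force
      have "sw (DA y) (\<lambda>c d. \<phi> (u * p c * 1) * \<psi> (v * d * 1)) = \<phi> (u * 1 * 1) * \<psi> (v * y * 1) + sw zs (\<lambda>w d. \<phi> (u * w * 1) * \<psi> (v * d * 1))"
        using zs(2)[OF bb, of u 1 v 1] by simp
      also have "\<dots> = 0" using zs0[OF Cp_C[OF u], of v] u z by simp
      finally show "sw (DA y) (\<lambda>c d. \<phi> (u * p c * 1) * \<psi> (v * d * 1)) = 0" .
    qed
    show ?thesis using 1 2 by simp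
  qed
  finally show "sw (DA (x * y)) (\<lambda>a b. \<phi> (p a) * \<psi> b) = \<phi> 1 * \<psi> (x * y)" .
qed

end



context mainloc begin

lemma contr: assumes x: "x \<in> H" and ch: "hom sA (*) \<chi>"
  shows "sw (DA x) (\<lambda>a b. sA (\<chi> a) b) \<in> H"
proof (rule H_charI)
  fix \<phi> \<psi> assume ph: "hom sB (*) \<phi>" and z: "\<forall>u\<in>Cp. \<phi> u = 0" and ps: "hom sA (*) \<psi>"
  define w where "w = sw (DA x) (\<lambda>a b. sA (\<chi> a) b)"
  define G where "G u = sw (DA u) (\<lambda>a b. \<phi> (p a) * \<psi> b)" for u
  have lG: "hom sA (*) G" unfolding G_def
    by (intro A.DL[OF bilI vs_field] lin_mult_right lin_mult_left hom_comp[OF p_hom] ph ps)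
  define \<psi>' where "\<psi>' b = sw (DA b) (\<lambda>b1 b2. \<chi> b1 * \<psi> b2)" for b
  have l\<psi>': "hom sA (*) \<psi>'" unfolding \<psi>'_def
    by (intro A.DL[OF bilI vs_field] lin_mult_right lin_mult_left ch ps)
  have pp: "hom sA (*) (\<lambda>u. \<phi> (p u))" by (rule hom_comp[OF p_hom ph])
  have t1: "tril sA sA sA (\<lambda>u v w. \<chi> u * \<phi> (p v) * \<psi> w)"
    by (intro trilI lin_mult_right lin_mult_left ch pp ps)
  have t2: "tril sA sA sA (\<lambda>u v w. \<phi> (p u) * \<chi> v * \<psi> w)"
    by (intro trilI lin_mult_right lin_mult_left ch pp ps)
  have "G w = sw (DA x) (\<lambda>a b. \<chi> a * G b)"
    by (simp add: w_def hom_sw[OF lG] homD(2)[OF lG])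
  also have "\<dots> = sw (DA x) (\<lambda>a b. sw (DA b) (\<lambda>b1 b2. \<chi> a * \<phi> (p b1) * \<psi> b2))"
    by (simp add: G_def sw_mult_left mult.assoc)
  also have "\<dots> = sw (DA x) (\<lambda>a b. sw (DA a) (\<lambda>a1 a2. \<chi> a1 * \<phi> (p a2) * \<psi> b))"
    using A.CA[OF t1, of x] by simp
  also have "\<dots> = sw (DA x) (\<lambda>a b. sw (DA a) (\<lambda>a1 a2. \<phi> (p a1) * \<chi> a2 * \<psi> b))"
  proof (rule sw_cong)
    fix a b
    have "sw (DA a) (\<lambda>a1 a2. \<chi> a1 * \<phi> (p a2) * \<psi> b) = sw (DA a) (\<lambda>a1 a2. \<chi> a1 * \<phi> (p a2)) * \<psi> b"
      by (simp add: sw_mult_right)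
    also have "\<dots> = sw (DA a) (\<lambda>a1 a2. \<chi> a2 * \<phi> (p a1)) * \<psi> b"
      by (simp add: cc[OF ch pp])
    also have "\<dots> = sw (DA a) (\<lambda>a1 a2. \<phi> (p a1) * \<chi> a2 * \<psi> b)"
      by (subst sw_mult_right) (simp add: mult_ac)
    finally show "sw (DA a) (\<lambda>a1 a2. \<chi> a1 * \<phi> (p a2) * \<psi> b) = sw (DA a) (\<lambda>a1 a2. \<phi> (p a1) * \<chi> a2 * \<psi> b)" .
  qed
  also have "\<dots> = sw (DA x) (\<lambda>a b. sw (DA b) (\<lambda>b1 b2. \<phi> (p a) * \<chi> b1 * \<psi> b2))"
    by (rule A.CA[OF t2])
  also have "\<dots> = sw (DA x) (\<lambda>a b. \<phi> (p a) * \<psi>' b)"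
    by (simp add: \<psi>'_def sw_mult_left mult.assoc)
  also have "\<dots> = \<phi> 1 * \<psi>' x" by (rule H_charD[OF x ph z l\<psi>'])
  also have "\<dots> = \<phi> 1 * \<psi> w"
    by (simp add: \<psi>'_def w_def hom_sw[OF ps] homD(2)[OF ps])
  finally show "sw (DA w) (\<lambda>a b. \<phi> (p a) * \<psi> b) = \<phi> 1 * \<psi> w" by (simp add: G_def)
qed

lemma D_H: assumes x: "x \<in> H" shows "in_tensor sA sA H H (DA x)"
proof -
  obtain Q where Q: "hom sA sA Q" "\<And>x. Q x \<in> H" "\<And>u. u \<in> H \<Longrightarrow> Q u = u"
    using projection[OF A.vs H_sub] by blast
  show ?thesis unfolding in_tensor_def
  proof (intro exI conjI)
    show "fst ` set (map (\<lambda>(a,b). (Q a, Q b)) (DA x)) \<subseteq> H" using Q(2) by auto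
    show "snd ` set (map (\<lambda>(a,b). (Q a, Q b)) (DA x)) \<subseteq> H" using Q(2) by auto
    show "tensor_eq sA sA (DA x) (map (\<lambda>(a,b). (Q a, Q b)) (DA x))"
    proof (rule tensor_eqI[OF A.vs A.vs])
      fix \<phi> \<psi> assume ph: "hom sA (*) \<phi>" and ps: "hom sA (*) \<psi>"
      have hp: "hom sA (*) (\<lambda>z. \<phi> z - \<phi> (Q z))" by (intro hom_diff_fun[OF vs_field] ph hom_comp[OF Q(1) ph])
      have hs: "hom sA (*) (\<lambda>z. \<psi> z - \<psi> (Q z))" by (intro hom_diff_fun[OF vs_field] ps hom_comp[OF Q(1) ps])
      have pq: "hom sA (*) (\<lambda>z. \<phi> (Q z))" by (rule hom_comp[OF Q(1) ph])
      have t1: "sw (DA x) (\<lambda>a b. (\<phi> a - \<phi> (Q a)) * \<psi> b) = 0"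
      proof -
        have "sw (DA x) (\<lambda>a b. (\<phi> a - \<phi> (Q a)) * \<psi> b) = sw (DA x) (\<lambda>a b. (\<phi> b - \<phi> (Q b)) * \<psi> a)"
          by (rule cc[OF hp ps])
        also have "\<dots> = (\<lambda>z. \<phi> z - \<phi> (Q z)) (sw (DA x) (\<lambda>a b. sA (\<psi> a) b))"
          by (simp only: hom_sw[OF hp] homD(2)[OF hp] mult.commute)
        also have "\<dots> = 0" using Q(3)[OF contr[OF x ps]] by simp
        finally show ?thesis .
      qed
      have t2: "sw (DA x) (\<lambda>a b. \<phi> (Q a) * (\<psi> b - \<psi> (Q b))) = 0"
      proof -
        have "sw (DA x) (\<lambda>a b. \<phi> (Q a) * (\<psi> b - \<psi> (Q b))) = (\<lambda>z. \<psi> z - \<psi> (Q z)) (sw (DA x) (\<lambda>a b. sA (\<phi> (Q a)) b))"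
          by (simp only: hom_sw[OF hs] homD(2)[OF hs])
        also have "\<dots> = 0" using Q(3)[OF contr[OF x pq]] by simp
        finally show ?thesis .
      qed
      have "sw (DA x) (\<lambda>a b. \<phi> a * \<psi> b) = sw (DA x) (\<lambda>a b. (\<phi> a - \<phi> (Q a)) * \<psi> b + \<phi> (Q a) * (\<psi> b - \<psi> (Q b)) + \<phi> (Q a) * \<psi> (Q b))"
        by (rule sw_cong) (simp add: algebra_simps)
      also have "\<dots> = sw (DA x) (\<lambda>a b. \<phi> (Q a) * \<psi> (Q b))"
        by (simp only: sw_add t1 t2) simp
      finally show "sw (DA x) (\<lambda>a b. \<phi> a * \<psi> b) = sw (map (\<lambda>(a,b). (Q a, Q b)) (DA x)) (\<lambda>a b. \<phi> a * \<psi> b)"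
        by simp
    qed
  qed
qed

lemma S_H: assumes x: "x \<in> H" shows "SA x \<in> H"
proof (rule H_charI)
  fix \<phi> \<psi> assume ph: "hom sB (*) \<phi>" and z: "\<forall>u\<in>Cp. \<phi> u = 0" and ps: "hom sA (*) \<psi>"
  have h1: "hom sA (*) (\<lambda>u. \<phi> (SB (p u)))" by (rule hom_comp[OF hom_comp[OF p_hom B.S_hom] ph])
  have h2: "hom sA (*) (\<lambda>u. \<psi> (SA u))" by (rule hom_comp[OF A.S_hom ps])
  have hS: "hom sB (*) (\<lambda>u. \<phi> (SB u))" by (rule hom_comp[OF B.S_hom ph])
  have zS: "\<forall>u\<in>Cp. \<phi> (SB u) = 0" using z Cp_S by blast
  have "sw (DA (SA x)) (\<lambda>c d. \<phi> (p c) * \<psi> d) = sw (DA x) (\<lambda>a b. \<phi> (p (SA b)) * \<psi> (SA a))"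
    by (rule A.AC[OF hom_comp[OF p_hom ph] ps])
  also have "\<dots> = sw (DA x) (\<lambda>a b. \<phi> (SB (p b)) * \<psi> (SA a))"
    by (simp add: PS)
  also have "\<dots> = sw (DA x) (\<lambda>a b. \<phi> (SB (p a)) * \<psi> (SA b))"
    by (rule cc[OF h1 h2, symmetric])
  also have "\<dots> = \<phi> (SB 1) * \<psi> (SA x)"
    by (rule H_charD[OF x hS zS h2])
  finally show "sw (DA (SA x)) (\<lambda>a b. \<phi> (p a) * \<psi> b) = \<phi> 1 * \<psi> (SA x)"
    by (simp add: B.S_one)
qed

lemma H_hopf: "hopf_subalgebra sA DA SA H"
  unfolding hopf_subalgebra_def using H_sub one_H mult_H D_H S_H by blast

end

theorem lemma2p5:
  fixes sA :: "'k::field \<Rightarrow> 'a::ring_1 \<Rightarrow> 'a" and \<Delta>A :: "'a \<Rightarrow> ('a \<times> 'a) list"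
    and \<epsilon>A :: "'a \<Rightarrow> 'k" and SA :: "'a \<Rightarrow> 'a"
    and sB :: "'k \<Rightarrow> 'b::ring_1 \<Rightarrow> 'b" and \<Delta>B :: "'b \<Rightarrow> ('b \<times> 'b) list"
    and \<epsilon>B :: "'b \<Rightarrow> 'k" and SB :: "'b \<Rightarrow> 'b"
    and p :: "'a \<Rightarrow> 'b"
  assumes "hopf_algebra sA \<Delta>A \<epsilon>A SA" and "cocommutative sA \<Delta>A"
    and "hopf_algebra sB \<Delta>B \<epsilon>B SB" and "cocommutative sB \<Delta>B"
    and "hopf_morphism sA \<Delta>A \<epsilon>A sB \<Delta>B \<epsilon>B p"
  shows "(\<forall>C. hopf_subalgebra sB \<Delta>B SB C \<longrightarrow> p ` h_inverse sA \<Delta>A sB \<epsilon>B p C \<subseteq> C)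
    \<and> (\<forall>D. hopf_subalgebra sA \<Delta>A SA D \<longrightarrow> D \<subseteq> h_inverse sA \<Delta>A sB \<epsilon>B p (p ` D))
    \<and> (\<forall>C D. hopf_subalgebra sB \<Delta>B SB C \<longrightarrow> hopf_subalgebra sA \<Delta>A SA D \<longrightarrow>
          (D \<subseteq> h_inverse sA \<Delta>A sB \<epsilon>B p C \<longleftrightarrow> p ` D \<subseteq> C))
    \<and> (\<forall>C. hopf_subalgebra sB \<Delta>B SB C \<longrightarrow>
          (C = p ` h_inverse sA \<Delta>A sB \<epsilon>B p C \<longleftrightarrow>
           (\<exists>D. hopf_subalgebra sA \<Delta>A SA D \<and> C = p ` D)))"
proof -
  interpret hm: hmor sA \<Delta>A \<epsilon>A SA sB \<Delta>B \<epsilon>B SB p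
    using assms by (simp add: hmor_def hmor_axioms_def hopf_def)
  have ml: "mainloc sA \<Delta>A \<epsilon>A SA sB \<Delta>B \<epsilon>B SB p C" if "hopf_subalgebra sB \<Delta>B SB C" for C
    using assms that by (simp add: mainloc_def mainloc_axioms_def hm.hmor_axioms)
  have i: "p ` h_inverse sA \<Delta>A sB \<epsilon>B p C \<subseteq> C" if "hopf_subalgebra sB \<Delta>B SB C" for C
    using mainloc.part1[OF ml[OF that]] by blast
  have ii: "D \<subseteq> h_inverse sA \<Delta>A sB \<epsilon>B p (p ` D)" if "hopf_subalgebra sA \<Delta>A SA D" for D
    by (rule hm.part2[OF that])
  have iii: "D \<subseteq> h_inverse sA \<Delta>A sB \<epsilon>B p C \<longleftrightarrow> p ` D \<subseteq> C"
    if C: "hopf_subalgebra sB \<Delta>B SB C" and D: "hopf_subalgebra sA \<Delta>A SA D" for C D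
  proof
    assume "D \<subseteq> h_inverse sA \<Delta>A sB \<epsilon>B p C"
    then show "p ` D \<subseteq> C" using i[OF C] by blast
  next
    assume "p ` D \<subseteq> C"
    then show "D \<subseteq> h_inverse sA \<Delta>A sB \<epsilon>B p C"
      using ii[OF D] h_inverse_mono[of "p ` D" C sA \<Delta>A sB \<epsilon>B p] by blast
  qed
  have iv: "C = p ` h_inverse sA \<Delta>A sB \<epsilon>B p C \<longleftrightarrow> (\<exists>D. hopf_subalgebra sA \<Delta>A SA D \<and> C = p ` D)"
    if C: "hopf_subalgebra sB \<Delta>B SB C" for C
  proof
    assume "C = p ` h_inverse sA \<Delta>A sB \<epsilon>B p C"
    then show "\<exists>D. hopf_subalgebra sA \<Delta>A SA D \<and> C = p ` D"
      using mainloc.H_hopf[OF ml[OF C]] by blast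
  next
    assume "\<exists>D. hopf_subalgebra sA \<Delta>A SA D \<and> C = p ` D"
    then obtain D where D: "hopf_subalgebra sA \<Delta>A SA D" "C = p ` D" by blast
    have "p ` D \<subseteq> p ` h_inverse sA \<Delta>A sB \<epsilon>B p C" using ii[OF D(1)] D(2) by blast
    then show "C = p ` h_inverse sA \<Delta>A sB \<epsilon>B p C" using i[OF C] D(2) by blast
  qed
  show ?thesis using i ii iii iv by blast
qed



end
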